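(* Let $h\in\mathbb{R}$ with $h\neq 0$, and let $\{\mathcal{H}_t\colon t\in\mathbb{R}\}$ be the one-parameter group of helicoidal motions of $\mathbb{R}^3$ given by $\mathcal{H}_t(x,y,z)=(x\cos t-y\sin t,\ x\sin t+y\cos t,\ z+ht)$. Let $\vec{v}\in\mathbb{R}^3$ be a unit vector and $\alpha\in\mathbb{R}$ with $\alpha\neq 0$. Let $\Sigma$ be an orientable surface immersed in the half-space $\{p\in\mathbb{R}^3\colon\langle p,\vec{v}\rangle>0\}$ which is invariant by the helicoidal group, i.e. $\mathcal{H}_t(\Sigma)=\Sigma$ for all $t\in\mathbb{R}$. If $\Sigma$ is an $\alpha$-singular minimal surface with respect to $\vec{v}$, i.e. its mean curvature satisfies $H(p)=\alpha\frac{\langle N(p),\vec{v}\rangle}{\langle p,\vec{v}\rangle}$ for all $p\in\Sigma$, then the twist axis (the $z$-axis) is contained in the vector plane $\{p\in\mathbb{R}^3\colon\langle p,\vec{v}\rangle=0\}$ (in particular $\vec{v}$ is orthogonal to the $z$-axis), $\alpha=-1$, and $\Sigma$ is a circular cylinder about the $z$-axis.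
   Context: $\langle\cdot,\cdot\rangle$ is the Euclidean inner product on $\mathbb{R}^3$, $N$ is the unit normal vector of $\Sigma$, and the mean curvature $H$ is defined as the sum of the principal curvatures (computed with respect to $N$). The value $\alpha=0$ is excluded throughout the paper. The helicoidal surface is assumed to be generated by moving a regular planar curve $\gamma(s)=(x(s),0,z(s))$ by the motions $\mathcal{H}_t$, i.e. parametrized by $\Psi(s,t)=(x(s)\cos t,x(s)\sin t,z(s)+ht)$ with $x^2+h^2x'^2>0$. *)

theory Defs
  imports "HOL-Analysis.Analysis" "HOL-Analysis.Cross3"
begin

definition helicoidal_motion :: "real \<Rightarrow> real \<Rightarrow> real^3 \<Rightarrow> real^3" where
  "helicoidal_motion h t p =
     vector [p$1 * cos t - p$2 * sin t, p$1 * sin t + p$2 * cos t, p$3 + h * t]"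

definition helicoidal_surface ::
  "real \<Rightarrow> (real \<Rightarrow> real) \<Rightarrow> (real \<Rightarrow> real) \<Rightarrow> real \<Rightarrow> real \<Rightarrow> real^3" where
  "helicoidal_surface h x z s t = helicoidal_motion h t (vector [x s, 0, z s])"

definition D_s :: "(real \<Rightarrow> real \<Rightarrow> real^3) \<Rightarrow> real \<Rightarrow> real \<Rightarrow> real^3" where
  "D_s P s t = vector_derivative (\<lambda>\<sigma>. P \<sigma> t) (at s)"

definition D_t :: "(real \<Rightarrow> real \<Rightarrow> real^3) \<Rightarrow> real \<Rightarrow> real \<Rightarrow> real^3" where
  "D_t P s t = vector_derivative (\<lambda>\<tau>. P s \<tau>) (at t)"

definition unit_normal :: "(real \<Rightarrow> real \<Rightarrow> real^3) \<Rightarrow> real \<Rightarrow> real \<Rightarrow> real^3" where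
  "unit_normal P s t =
     (let n = cross3 (D_s P s t) (D_t P s t) in (1 / norm n) *\<^sub>R n)"

text \<open>Mean curvature = sum of principal curvatures w.r.t. N:
  H = (E n - 2 F m + G l) / (E G - F^2), with l, m, n the coefficients of the
  second fundamental form with respect to N.\<close>
definition mean_curvature :: "(real \<Rightarrow> real \<Rightarrow> real^3) \<Rightarrow> real \<Rightarrow> real \<Rightarrow> real" where
  "mean_curvature P s t =
     (let Ps = D_s P s t; Pt = D_t P s t;
          Pss = D_s (D_s P) s t; Pst = D_t (D_s P) s t; Ptt = D_t (D_t P) s t;
          N = unit_normal P s t;
          E = Ps \<bullet> Ps; F = Ps \<bullet> Pt; G = Pt \<bullet> Pt;
          l = Pss \<bullet> N; m = Pst \<bullet> N; n = Ptt \<bullet> N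
      in (E * n - 2 * F * m + G * l) / (E * G - F\<^sup>2))"

end

theory Submission imports Defs begin

lemma vec3_split: "(vector [a, b, c] :: real^3) = a *\<^sub>R axis 1 1 + b *\<^sub>R axis 2 1 + c *\<^sub>R axis 3 1"
  by (simp add: vec_eq_iff forall_3 axis_def)

lemma vec3_deriv:
  assumes "(f1 has_real_derivative a1) (at u)" "(f2 has_real_derivative a2) (at u)" "(f3 has_real_derivative a3) (at u)"
  shows "((\<lambda>w. vector [f1 w, f2 w, f3 w] :: real^3) has_vector_derivative vector [a1, a2, a3]) (at u)"
proof -
  have "((\<lambda>w. f1 w *\<^sub>R axis 1 1 + f2 w *\<^sub>R axis 2 1 + f3 w *\<^sub>R axis 3 (1::real) :: real^3) has_vector_derivative
        a1 *\<^sub>R axis 1 1 + a2 *\<^sub>R axis 2 1 + a3 *\<^sub>R axis 3 1) (at u)"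
    using has_vector_derivative_scaleR[OF assms(1) has_vector_derivative_const[of "axis 1 1"]]
      has_vector_derivative_scaleR[OF assms(2) has_vector_derivative_const[of "axis 2 1"]]
      has_vector_derivative_scaleR[OF assms(3) has_vector_derivative_const[of "axis 3 1"]]
    by (intro has_vector_derivative_add) auto
  then show ?thesis by (simp only: vec3_split)
qed

lemma P_eq: "helicoidal_surface h x z s t = vector [x s * cos t, x s * sin t, z s + h * t]"
  by (simp add: helicoidal_surface_def helicoidal_motion_def)

lemma zero_on_open_deriv:
  fixes g :: "real \<Rightarrow> real"
  assumes "(g has_real_derivative g') (at t)" "open J" "t \<in> J" "\<And>u. u \<in> J \<Longrightarrow> g u = c"
  shows "g' = 0"
proof -
  have "((\<lambda>_. c) has_real_derivative 0) (at t)" by simp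
  then have "(g has_real_derivative 0) (at t)"
    by (rule has_field_derivative_transform_within_open[OF _ assms(2,3)]) (use assms(4) in auto)
  then show ?thesis using assms(1) DERIV_unique by blast
qed

lemma Ds_eq:
  assumes "(x has_real_derivative xd) (at s)" "(z has_real_derivative zd) (at s)"
  shows "D_s (helicoidal_surface h x z) s t = vector [xd * cos t, xd * sin t, zd]"
  unfolding D_s_def P_eq
  by (rule vector_derivative_at, rule vec3_deriv) (auto intro!: derivative_eq_intros assms)

lemma Dt_eq: "D_t (helicoidal_surface h x z) s t = vector [- (x s * sin t), x s * cos t, h]"
  unfolding D_t_def P_eq
  by (rule vector_derivative_at, rule vec3_deriv) (auto intro!: derivative_eq_intros)

lemma Dtt_eq: "D_t (D_t (helicoidal_surface h x z)) s t = vector [- (x s * cos t), - (x s * sin t), 0]"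
  unfolding D_t_def[of "D_t _"] Dt_eq
  by (rule vector_derivative_at, rule vec3_deriv) (auto intro!: derivative_eq_intros)

lemma Dst_eq:
  assumes "(x has_real_derivative xd) (at s)" "(z has_real_derivative zd) (at s)"
  shows "D_t (D_s (helicoidal_surface h x z)) s t = vector [- (xd * sin t), xd * cos t, 0]"
  unfolding D_t_def[of "D_s _"] Ds_eq[OF assms]
  by (rule vector_derivative_at, rule vec3_deriv) (auto intro!: derivative_eq_intros)

lemma Dss_eq:
  assumes I: "open I" "s \<in> I"
    and dx: "\<And>s. s \<in> I \<Longrightarrow> (x has_real_derivative x' s) (at s)"
    and dx': "\<And>s. s \<in> I \<Longrightarrow> (x' has_real_derivative x'' s) (at s)"
    and dz: "\<And>s. s \<in> I \<Longrightarrow> (z has_real_derivative z' s) (at s)"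
    and dz': "\<And>s. s \<in> I \<Longrightarrow> (z' has_real_derivative z'' s) (at s)"
  shows "D_s (D_s (helicoidal_surface h x z)) s t = vector [x'' s * cos t, x'' s * sin t, z'' s]"
  unfolding D_s_def[of "D_s _"]
proof (rule vector_derivative_at)
  have "((\<lambda>\<sigma>. vector [x' \<sigma> * cos t, x' \<sigma> * sin t, z' \<sigma>] :: real^3) has_vector_derivative
     vector [x'' s * cos t, x'' s * sin t, z'' s]) (at s)"
    by (rule vec3_deriv) (auto intro!: derivative_eq_intros dx' dz' I)
  then show "((\<lambda>\<sigma>. D_s (helicoidal_surface h x z) \<sigma> t) has_vector_derivative
     vector [x'' s * cos t, x'' s * sin t, z'' s]) (at s)"
    by (rule has_vector_derivative_transform_within_open[OF _ I]) (simp add: Ds_eq[OF dx dz])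
qed

lemma MC_alg:
  fixes P :: "real \<Rightarrow> real \<Rightarrow> real^3"
  assumes cs: "c\<^sup>2 + sn\<^sup>2 = 1"
    and Ps: "D_s P s t = vector [X1 * c, X1 * sn, Z1]"
    and Pt: "D_t P s t = vector [- (X * sn), X * c, h]"
    and Pss: "D_s (D_s P) s t = vector [X2 * c, X2 * sn, Z2]"
    and Pst: "D_t (D_s P) s t = vector [- (X1 * sn), X1 * c, 0]"
    and Ptt: "D_t (D_t P) s t = vector [- (X * c), - (X * sn), 0]"
    and Q: "Q = X\<^sup>2 * Z1\<^sup>2 + h\<^sup>2 * X1\<^sup>2 + X\<^sup>2 * X1\<^sup>2"
    and Qpos: "Q > 0"
  shows "unit_normal P s t = (1 / sqrt Q) *\<^sub>R vector [X1 * sn * h - Z1 * X * c, - (Z1 * X * sn) - h * X1 * c, X * X1]"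
    and "mean_curvature P s t = ((X1\<^sup>2 + Z1\<^sup>2) * X\<^sup>2 * Z1 + 2 * h\<^sup>2 * Z1 * X1\<^sup>2
            + (X\<^sup>2 + h\<^sup>2) * X * (X1 * Z2 - X2 * Z1)) / (sqrt Q * Q)"
proof -
  define n :: "real^3" where "n = vector [X1 * sn * h - Z1 * X * c, - (Z1 * X * sn) - h * X1 * c, X * X1]"
  have cr: "cross3 (D_s P s t) (D_t P s t) = n"
    unfolding Ps Pt n_def cross3_def by (simp add: vec_eq_iff forall_3; use cs in algebra)
  have nn: "n \<bullet> n = Q"
    unfolding n_def Q by (simp add: inner_vec_def sum_3; use cs in algebra)
  have nrm: "norm n = sqrt Q" by (simp add: norm_eq_sqrt_inner nn)
  have N: "unit_normal P s t = (1 / sqrt Q) *\<^sub>R n"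
    unfolding unit_normal_def Let_def cr nrm ..
  then show "unit_normal P s t = (1 / sqrt Q) *\<^sub>R vector [X1 * sn * h - Z1 * X * c, - (Z1 * X * sn) - h * X1 * c, X * X1]"
    by (simp add: n_def)
  have E: "D_s P s t \<bullet> D_s P s t = X1\<^sup>2 + Z1\<^sup>2"
    unfolding Ps by (simp add: inner_vec_def sum_3; use cs in algebra)
  have F: "D_s P s t \<bullet> D_t P s t = Z1 * h"
    unfolding Ps Pt by (simp add: inner_vec_def sum_3; use cs in algebra)
  have G: "D_t P s t \<bullet> D_t P s t = X\<^sup>2 + h\<^sup>2"
    unfolding Pt by (simp add: inner_vec_def sum_3; use cs in algebra)
  have l: "D_s (D_s P) s t \<bullet> n = X * (X1 * Z2 - X2 * Z1)"
    unfolding Pss n_def by (simp add: inner_vec_def sum_3; use cs in algebra)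
  have m: "D_t (D_s P) s t \<bullet> n = - (h * X1\<^sup>2)"
    unfolding Pst n_def by (simp add: inner_vec_def sum_3; use cs in algebra)
  have nn2: "D_t (D_t P) s t \<bullet> n = X\<^sup>2 * Z1"
    unfolding Ptt n_def by (simp add: inner_vec_def sum_3; use cs in algebra)
  have den: "(X1\<^sup>2 + Z1\<^sup>2) * (X\<^sup>2 + h\<^sup>2) - (Z1 * h)\<^sup>2 = Q"
    unfolding Q by algebra
  have sQ: "sqrt Q > 0" using Qpos by simp
  show "mean_curvature P s t = ((X1\<^sup>2 + Z1\<^sup>2) * X\<^sup>2 * Z1 + 2 * h\<^sup>2 * Z1 * X1\<^sup>2
            + (X\<^sup>2 + h\<^sup>2) * X * (X1 * Z2 - X2 * Z1)) / (sqrt Q * Q)"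
    unfolding mean_curvature_def Let_def N inner_scaleR_right E F G l m nn2 den
    using sQ Qpos by (simp add: field_simps power2_eq_square)
qed

lemma trig_indep:
  fixes A B C D :: real
  assumes J: "open J" "J \<noteq> {}" and f: "\<And>t. t \<in> J \<Longrightarrow> A + B * t + C * cos t + D * sin t = 0"
  shows "A = 0 \<and> B = 0 \<and> C = 0 \<and> D = 0"
proof -
  have d1: "B - C * sin t + D * cos t = 0" if "t \<in> J" for t
  proof (rule zero_on_open_deriv[OF _ J(1) that f])
    show "((\<lambda>t. A + B * t + C * cos t + D * sin t) has_real_derivative B - C * sin t + D * cos t) (at t)"
      by (auto intro!: derivative_eq_intros)
  qed
  have d2: "- C * cos t - D * sin t = 0" if "t \<in> J" for t
  proof (rule zero_on_open_deriv[OF _ J(1) that d1])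
    show "((\<lambda>t. B - C * sin t + D * cos t) has_real_derivative - C * cos t - D * sin t) (at t)"
      by (auto intro!: derivative_eq_intros)
  qed
  have lin: "A + B * t = 0" if "t \<in> J" for t using f[OF that] d2[OF that] by simp
  obtain t0 where t0: "t0 \<in> J" using J by auto
  obtain e where e: "e > 0" "ball t0 e \<subseteq> J" using J(1) t0 open_contains_ball by blast
  have te: "t0 + e/2 \<in> J" using e by (intro subsetD[OF e(2)]) (simp add: dist_real_def)
  have "B * (e/2) = (A + B*(t0+e/2)) - (A + B*t0)" by (simp add: algebra_simps)
  also have "... = 0" using lin[OF te] lin[OF t0] by simp
  finally have "B * (e/2) = 0" .
  then have "B = 0" using e by simp
  then have AB: "A = 0" "B = 0" using lin[OF t0] by auto
  have c1: "C * cos t0 + D * sin t0 = 0" using f[OF t0] AB by simp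
  have c2: "- C * sin t0 + D * cos t0 = 0" using d1[OF t0] AB by simp
  have "C = cos t0 * (C * cos t0 + D * sin t0) - sin t0 * (- C * sin t0 + D * cos t0)"
    using sin_cos_squared_add[of t0] by algebra
  then have "C = 0" using c1 c2 by simp
  moreover have "D = sin t0 * (C * cos t0 + D * sin t0) + cos t0 * (- C * sin t0 + D * cos t0)"
    using sin_cos_squared_add[of t0] by algebra
  then have "D = 0" using c1 c2 by simp
  ultimately show ?thesis using AB by simp
qed

lemma coef_alg:
  fixes w :: real
  assumes e: "H * (X * c * v1 + X * sn * v2 + (Z + h * t) * v3)
      = \<alpha> * ((1 / w) * ((X1 * sn * h - Z1 * X * c) * v1 + (- (Z1 * X * sn) - h * X1 * c) * v2 + X * X1 * v3))"
  shows "H * Z * v3 - \<alpha> * X * X1 * v3 / w + H * h * v3 * t +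
       (H * X * v1 + \<alpha> * (Z1 * X * v1 + h * X1 * v2) / w) * c +
       (H * X * v2 - \<alpha> * (X1 * h * v1 - Z1 * X * v2) / w) * sn = 0"
proof -
  have id: "H * Z * v3 - \<alpha> * X * X1 * v3 * u + H * h * v3 * t +
       (H * X * v1 + \<alpha> * (Z1 * X * v1 + h * X1 * v2) * u) * c +
       (H * X * v2 - \<alpha> * (X1 * h * v1 - Z1 * X * v2) * u) * sn =
     H * (X * c * v1 + X * sn * v2 + (Z + h * t) * v3)
      - \<alpha> * (u * ((X1 * sn * h - Z1 * X * c) * v1 + (- (Z1 * X * sn) - h * X1 * c) * v2 + X * X1 * v3))" for u
    by algebra
  show ?thesis using id[of "1/w"] e by (simp add: divide_inverse)
qed

theorem theorem1:
  fixes h \<alpha> :: real and v :: "real^3"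
    and x x' x'' z z' z'' :: "real \<Rightarrow> real"
    and I J :: "real set"
  assumes h: "h \<noteq> 0"
    and alpha: "\<alpha> \<noteq> 0"
    and v: "norm v = 1"
    and I: "open I" "is_interval I" "I \<noteq> {}"
    and J: "open J" "is_interval J" "J \<noteq> {}"
    and dx: "\<And>s. s \<in> I \<Longrightarrow> (x has_real_derivative x' s) (at s)"
    and dx': "\<And>s. s \<in> I \<Longrightarrow> (x' has_real_derivative x'' s) (at s)"
    and dz: "\<And>s. s \<in> I \<Longrightarrow> (z has_real_derivative z' s) (at s)"
    and dz': "\<And>s. s \<in> I \<Longrightarrow> (z' has_real_derivative z'' s) (at s)"
    and regular: "\<And>s. s \<in> I \<Longrightarrow> (x' s)\<^sup>2 + (z' s)\<^sup>2 > 0"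
    and immersed: "\<And>s. s \<in> I \<Longrightarrow> (x s)\<^sup>2 + h\<^sup>2 * (x' s)\<^sup>2 > 0"
    and halfspace: "\<And>s t. s \<in> I \<Longrightarrow> t \<in> J \<Longrightarrow> helicoidal_surface h x z s t \<bullet> v > 0"
    and singular_minimal: "\<And>s t. s \<in> I \<Longrightarrow> t \<in> J \<Longrightarrow>
          mean_curvature (helicoidal_surface h x z) s t =
          \<alpha> * (unit_normal (helicoidal_surface h x z) s t \<bullet> v) / (helicoidal_surface h x z s t \<bullet> v)"
  shows "(\<forall>c::real. vector [0, 0, c] \<bullet> v = 0) \<and> \<alpha> = -1 \<and>
         (\<exists>r>0. \<forall>s\<in>I. \<forall>t\<in>J.
            (helicoidal_surface h x z s t $ 1)\<^sup>2 + (helicoidal_surface h x z s t $ 2)\<^sup>2 = r\<^sup>2)"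
proof -
  define v1 where "v1 = v $ 1"
  define v2 where "v2 = v $ 2"
  define v3 where "v3 = v $ 3"
  define Q where "Q s = (x s)\<^sup>2 * (z' s)\<^sup>2 + h\<^sup>2 * (x' s)\<^sup>2 + (x s)\<^sup>2 * (x' s)\<^sup>2" for s
  define Hs where "Hs s = (((x' s)\<^sup>2 + (z' s)\<^sup>2) * (x s)\<^sup>2 * z' s + 2 * h\<^sup>2 * z' s * (x' s)\<^sup>2
            + ((x s)\<^sup>2 + h\<^sup>2) * x s * (x' s * z'' s - x'' s * z' s)) / (sqrt (Q s) * Q s)" for s
  have Qpos: "Q s > 0" if "s \<in> I" for s
  proof (cases "x s = 0")
    case True then show ?thesis using immersed[OF that] by (simp add: Q_def)
  next
    case False
    then have "(x s)\<^sup>2 * ((x' s)\<^sup>2 + (z' s)\<^sup>2) > 0" using regular[OF that] by simp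
    moreover have "h\<^sup>2 * (x' s)\<^sup>2 \<ge> 0" by simp
    ultimately show ?thesis unfolding Q_def by (simp add: algebra_simps) (smt (verit) zero_le_power2 mult_nonneg_nonneg)
  qed
  have W: "sqrt (Q s) > 0" if "s \<in> I" for s using Qpos[OF that] by simp
  have eqn: "Hs s * (x s * cos t * v1 + x s * sin t * v2 + (z s + h * t) * v3)
      = \<alpha> * ((1 / sqrt (Q s)) * ((x' s * sin t * h - z' s * x s * cos t) * v1
           + (- (z' s * x s * sin t) - h * x' s * cos t) * v2 + x s * x' s * v3))"
    if s: "s \<in> I" and t: "t \<in> J" for s t
  proof -
    note MC = MC_alg[OF sin_cos_squared_add2[of t] Ds_eq[OF dx[OF s] dz[OF s]] Dt_eq
        Dss_eq[OF I(1) s dx dx' dz dz'] Dst_eq[OF dx[OF s] dz[OF s]] Dtt_eq Q_def[of s] Qpos[OF s]]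
    have Pv: "helicoidal_surface h x z s t \<bullet> v = x s * cos t * v1 + x s * sin t * v2 + (z s + h * t) * v3"
      by (simp add: P_eq inner_vec_def sum_3 v1_def v2_def v3_def)
    have Nv: "unit_normal (helicoidal_surface h x z) s t \<bullet> v = (1 / sqrt (Q s)) * ((x' s * sin t * h - z' s * x s * cos t) * v1
           + (- (z' s * x s * sin t) - h * x' s * cos t) * v2 + x s * x' s * v3)"
      by (simp add: MC(1) inner_vec_def sum_3 v1_def v2_def v3_def algebra_simps add_divide_distrib diff_divide_distrib)
    have pos: "helicoidal_surface h x z s t \<bullet> v > 0" using halfspace[OF s t] .
    have "mean_curvature (helicoidal_surface h x z) s t = Hs s"
      using MC(2) unfolding Hs_def by simp
    then have "Hs s = \<alpha> * (unit_normal (helicoidal_surface h x z) s t \<bullet> v) / (helicoidal_surface h x z s t \<bullet> v)"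
      using singular_minimal[OF s t] by simp
    then have "Hs s * (helicoidal_surface h x z s t \<bullet> v) = \<alpha> * (unit_normal (helicoidal_surface h x z) s t \<bullet> v)"
      using pos by (simp add: field_simps)
    then show ?thesis unfolding Pv Nv .
  qed
  have coef: "Hs s * z s * v3 - \<alpha> * x s * x' s * v3 / sqrt (Q s) = 0 \<and> Hs s * h * v3 = 0 \<and>
     Hs s * x s * v1 + \<alpha> * (z' s * x s * v1 + h * x' s * v2) / sqrt (Q s) = 0 \<and>
     Hs s * x s * v2 - \<alpha> * (x' s * h * v1 - z' s * x s * v2) / sqrt (Q s) = 0" if s: "s \<in> I" for s
  proof (rule trig_indep[OF J(1) J(3)])
    fix t assume t: "t \<in> J"
    show "Hs s * z s * v3 - \<alpha> * x s * x' s * v3 / sqrt (Q s) + Hs s * h * v3 * t +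
       (Hs s * x s * v1 + \<alpha> * (z' s * x s * v1 + h * x' s * v2) / sqrt (Q s)) * cos t +
       (Hs s * x s * v2 - \<alpha> * (x' s * h * v1 - z' s * x s * v2) / sqrt (Q s)) * sin t = 0"
      using coef_alg[OF eqn[OF s t]] by simp
  qed
  obtain s0 where s0: "s0 \<in> I" using I(3) by auto
  have HZ: "Hs s * v3 = 0" if s: "s \<in> I" for s using coef[OF s] h by simp
  have XX: "x s * x' s * v3 = 0" if s: "s \<in> I" for s
  proof -
    have c1: "Hs s * z s * v3 - \<alpha> * x s * x' s * v3 / sqrt (Q s) = 0" using coef[OF s] by blast
    have "Hs s * z s * v3 = 0" using HZ[OF s] by (metis mult.commute mult.left_commute mult_zero_right)
    then have "\<alpha> * x s * x' s * v3 / sqrt (Q s) = 0" using c1 by linarith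
    then show ?thesis using alpha W[OF s] by simp
  qed
  have CD1: "(v1\<^sup>2 + v2\<^sup>2) * (Hs s * x s + \<alpha> * z' s * x s / sqrt (Q s)) = 0" if s: "s \<in> I" for s
  proof -
    have id: "(v1\<^sup>2 + v2\<^sup>2) * (Hs s * x s + \<alpha> * z' s * x s / sqrt (Q s)) =
      v1 * (Hs s * x s * v1 + \<alpha> * (z' s * x s * v1 + h * x' s * v2) / sqrt (Q s)) +
      v2 * (Hs s * x s * v2 - \<alpha> * (x' s * h * v1 - z' s * x s * v2) / sqrt (Q s))"
      by (simp add: divide_inverse algebra_simps power2_eq_square)
    show ?thesis unfolding id using coef[OF s] by simp
  qed
  have CD2: "(v1\<^sup>2 + v2\<^sup>2) * (\<alpha> * h * x' s / sqrt (Q s)) = 0" if s: "s \<in> I" for s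
  proof -
    have id: "(v1\<^sup>2 + v2\<^sup>2) * (\<alpha> * h * x' s / sqrt (Q s)) =
      v2 * (Hs s * x s * v1 + \<alpha> * (z' s * x s * v1 + h * x' s * v2) / sqrt (Q s)) -
      v1 * (Hs s * x s * v2 - \<alpha> * (x' s * h * v1 - z' s * x s * v2) / sqrt (Q s))"
      by (simp add: divide_inverse algebra_simps power2_eq_square)
    show ?thesis unfolding id using coef[OF s] by simp
  qed
  have const: "(\<forall>s\<in>I. x s = x s0) \<and> (\<forall>s\<in>I. x'' s = 0 \<and> x s \<noteq> 0 \<and> z' s \<noteq> 0 \<and>
      Q s = (x s)\<^sup>2 * (z' s)\<^sup>2 \<and> Hs s * (sqrt (Q s) * Q s) = (z' s)^3 * (x s)\<^sup>2)"
    if x0: "\<forall>s\<in>I. x' s = 0"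
  proof -
    have "\<exists>k. \<forall>s\<in>I. x s = k"
    proof (rule has_field_derivative_zero_constant)
      show "convex I" using I(2) by (simp add: is_interval_convex)
      fix s assume s: "s \<in> I"
      show "(x has_field_derivative 0) (at s within I)"
        using dx[OF s] x0 s by (auto intro: has_field_derivative_at_within)
    qed
    then obtain k where k: "\<forall>s\<in>I. x s = k" by blast
    have A: "\<forall>s\<in>I. x s = x s0" using k s0 by simp
    have B: "x'' s = 0 \<and> x s \<noteq> 0 \<and> z' s \<noteq> 0 \<and>
      Q s = (x s)\<^sup>2 * (z' s)\<^sup>2 \<and> Hs s * (sqrt (Q s) * Q s) = (z' s)^3 * (x s)\<^sup>2" if s: "s \<in> I" for s
    proof -
      have x2: "x'' s = 0" using zero_on_open_deriv[OF dx'[OF s] I(1) s, of 0] x0 by simp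
      have x1: "x' s = 0" using x0 s by simp
      have xn: "x s \<noteq> 0" using immersed[OF s] x1 by auto
      have zn: "z' s \<noteq> 0" using regular[OF s] x1 by auto
      have Qe: "Q s = (x s)\<^sup>2 * (z' s)\<^sup>2" unfolding Q_def x1 by simp
      have "sqrt (Q s) * Q s \<noteq> 0" using Qpos[OF s] by simp
      then have "Hs s * (sqrt (Q s) * Q s) = (((x' s)\<^sup>2 + (z' s)\<^sup>2) * (x s)\<^sup>2 * z' s + 2 * h\<^sup>2 * z' s * (x' s)\<^sup>2
            + ((x s)\<^sup>2 + h\<^sup>2) * x s * (x' s * z'' s - x'' s * z' s))"
        unfolding Hs_def by simp
      also have "\<dots> = (z' s)^3 * (x s)\<^sup>2" unfolding x1 x2 by (simp add: power2_eq_square power3_eq_cube)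
      finally show ?thesis using x2 xn zn Qe by simp
    qed
    show ?thesis using A B by blast
  qed
  have v3z: "v3 = 0"
  proof (rule ccontr)
    assume v3: "v3 \<noteq> 0"
    have xx: "x s * x' s = 0" if "s \<in> I" for s using XX[OF that] v3 by simp
    have "\<exists>k. \<forall>s\<in>I. (x s)\<^sup>2 = k"
    proof (rule has_field_derivative_zero_constant)
      show "convex I" using I(2) by (simp add: is_interval_convex)
      fix s assume s: "s \<in> I"
      have "((\<lambda>u. (x u)\<^sup>2) has_field_derivative 2 * x s * x' s) (at s)"
        using dx[OF s] by (auto intro!: derivative_eq_intros)
      then show "((\<lambda>u. (x u)\<^sup>2) has_field_derivative 0) (at s within I)"
        using xx[OF s] by (auto intro: has_field_derivative_at_within)
    qed
    then obtain k where k: "\<forall>s\<in>I. (x s)\<^sup>2 = k" by blast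
    have x0: "\<forall>s\<in>I. x' s = 0"
    proof
      fix s assume s: "s \<in> I"
      show "x' s = 0"
      proof (cases "x s = 0")
        case False then show ?thesis using xx[OF s] by simp
        next
        case True
        then have "k = 0" using k s by force
        then have "\<forall>u\<in>I. x u = 0" using k by simp
        then show ?thesis using zero_on_open_deriv[OF dx[OF s] I(1) s, of 0] by simp
      qed
    qed
    note c = const[OF x0]
    have cs0: "x'' s0 = 0 \<and> x s0 \<noteq> 0 \<and> z' s0 \<noteq> 0 \<and>
      Q s0 = (x s0)\<^sup>2 * (z' s0)\<^sup>2 \<and> Hs s0 * (sqrt (Q s0) * Q s0) = (z' s0)^3 * (x s0)\<^sup>2" using c s0 by blast
    have "Hs s0 = 0" using HZ[OF s0] v3 by simp
    then have "(z' s0)^3 * (x s0)\<^sup>2 = 0" using cs0 by auto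
    then show False using cs0 by simp
  qed
  have vv: "v1\<^sup>2 + v2\<^sup>2 = 1"
  proof -
    have "v \<bullet> v = 1" using v by (simp add: power2_norm_eq_inner[symmetric])
    then show ?thesis using v3z by (simp add: inner_vec_def sum_3 v1_def v2_def v3_def power2_eq_square)
  qed
  have x0: "\<forall>s\<in>I. x' s = 0"
  proof
    fix s assume s: "s \<in> I"
    show "x' s = 0" using CD2[OF s] vv alpha h W[OF s] by simp
  qed
  note c = const[OF x0]
  have cs0: "x'' s0 = 0 \<and> x s0 \<noteq> 0 \<and> z' s0 \<noteq> 0 \<and>
      Q s0 = (x s0)\<^sup>2 * (z' s0)\<^sup>2 \<and> Hs s0 * (sqrt (Q s0) * Q s0) = (z' s0)^3 * (x s0)\<^sup>2" using c s0 by blast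
  have al: "\<alpha> = -1"
  proof -
    let ?X = "x s0" and ?Z = "z' s0" and ?W = "sqrt (Q s0)"
    have W0: "?W \<noteq> 0" using W[OF s0] by simp
    have e1: "Hs s0 * ?X + \<alpha> * ?Z * ?X / ?W = 0" using CD1[OF s0] vv by simp
    have "(Hs s0 * ?X + \<alpha> * ?Z * ?X / ?W) * (?W * Q s0) = Hs s0 * (?W * Q s0) * ?X + \<alpha> * ?Z * ?X * Q s0"
      using W0 by (simp add: field_simps)
    also have "\<dots> = ?Z^3 * ?X^2 * ?X + \<alpha> * ?Z * ?X * (?X^2 * ?Z^2)"
    proof -
      have h1: "Hs s0 * (?W * Q s0) = ?Z^3 * ?X^2" and h2: "Q s0 = ?X^2 * ?Z^2" using cs0 by blast+
      show ?thesis by (subst h1, subst h2, rule refl)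
    qed
    also have "\<dots> = ?Z^3 * ?X^3 * (1 + \<alpha>)"
      by (simp add: power2_eq_square power3_eq_cube algebra_simps)
    finally have "?Z^3 * ?X^3 * (1 + \<alpha>) = 0" using e1 by simp
    then show ?thesis using cs0 by auto
  qed
  have part3: "\<exists>r>0. \<forall>s\<in>I. \<forall>t\<in>J.
            (helicoidal_surface h x z s t $ 1)\<^sup>2 + (helicoidal_surface h x z s t $ 2)\<^sup>2 = r\<^sup>2"
  proof (intro exI[of _ "\<bar>x s0\<bar>"] conjI ballI)
    show "\<bar>x s0\<bar> > 0" using cs0 by simp
    fix s t assume s: "s \<in> I" and "t \<in> J"
    have "(helicoidal_surface h x z s t $ 1)\<^sup>2 + (helicoidal_surface h x z s t $ 2)\<^sup>2
       = (x s)\<^sup>2 * ((cos t)\<^sup>2 + (sin t)\<^sup>2)"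
      using sin_cos_squared_add[of t] by (simp add: P_eq power2_eq_square; algebra)
    also have "\<dots> = \<bar>x s0\<bar>\<^sup>2" using c s by (metis sin_cos_squared_add2 mult_1_right power2_abs)
    finally show "(helicoidal_surface h x z s t $ 1)\<^sup>2 + (helicoidal_surface h x z s t $ 2)\<^sup>2 = \<bar>x s0\<bar>\<^sup>2" .
  qed
  have part1: "\<forall>c::real. vector [0, 0, c] \<bullet> v = 0"
    using v3z by (simp add: inner_vec_def sum_3 v3_def)
  show ?thesis using part1 al part3 by blast
qed

end
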